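(* Let $Q=(q_n)_{n\ge1}$ be a basic sequence that is infinite in limit, and let $F$ be a $Q$-special sequence. Then $x_F$ is $Q$-distribution normal, i.e. the sequence $\left(q_1q_2\cdots q_n x_F \bmod 1\right)_{n=0}^{\infty}$ is uniformly distributed in $[0,1)$.
   Context: A basic sequence is a sequence $Q=(q_n)_{n\ge1}$ of integers with $q_n\ge 2$; it is infinite in limit if $q_n\to\infty$. $\mathbb{N}$ denotes the positive integers. For each positive integer $j$ let $\nu_j=\min\{N : q_m\ge 2j^2 \text{ for all } m\ge N\}$. Define $l_1=\max(\nu_2-1,1)$ and, recursively for $i\ge 2$, $l_i=\max\big(\min\{k\in\mathbb{N} : l_1+2l_2+\cdots+(i-1)l_{i-1}+ik\ge \nu_{i+1}-1\},1\big)$. Put $L_i=\sum_{j=1}^i jl_j$ (with $L_0=0$). Let $S_Q=\{(a,b,c)\in\mathbb{N}^3 : b\le l_a,\ c\le a\}$ and $\phi_Q(a,b,c)=L_{a-1}+(b-1)a+c$; $\phi_Q$ is a bijection $S_Q\to\mathbb{N}$. A $Q$-special sequence is a family of integers $F=(F_{(a,b,c)})_{(a,b,c)\in S_Q}$ with $F_{(a,b,1)}=0$ for all $(a,b,1)\in S_Q$ and $\frac{F_{(a,b,c)}}{q_{\phi_Q(a,b,c)}}\in\left[\frac{c-1}{a}-\frac{1}{2a^2},\frac{c-1}{a}+\frac{1}{2a^2}\right]$ for $(a,b,c)\in S_Q$ with $c>1$. For such $F$ put $E_{F,n}=F_{\phi_Q^{-1}(n)}$ and $x_F=\sum_{n=1}^\infty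 \frac{E_{F,n}}{q_1q_2\cdots q_n}$. *)

theory Defs
  imports Complex_Main
begin

text \<open>Sequences are indexed from 1; the value at index 0 is irrelevant.\<close>

definition basic_sequence :: "(nat \<Rightarrow> nat) \<Rightarrow> bool" where
  "basic_sequence q \<longleftrightarrow> (\<forall>n\<ge>1. q n \<ge> 2)"

definition infinite_in_limit :: "(nat \<Rightarrow> nat) \<Rightarrow> bool" where
  "infinite_in_limit q \<longleftrightarrow> filterlim q at_top sequentially"

definition nu :: "(nat \<Rightarrow> nat) \<Rightarrow> nat \<Rightarrow> nat" where
  "nu q j = (LEAST N. N \<ge> 1 \<and> (\<forall>m\<ge>N. q m \<ge> 2 * j ^ 2))"

text \<open>lL q i = (l_i, L_i), computed simultaneously; lL q 0 = (0, L_0) = (0,0).\<close>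
primrec lL :: "(nat \<Rightarrow> nat) \<Rightarrow> nat \<Rightarrow> nat \<times> nat" where
  "lL q 0 = (0, 0)"
| "lL q (Suc i) =
     (let Lprev = snd (lL q i);
          l = (if i = 0 then max (nu q 2 - 1) 1
               else max (LEAST k. k \<ge> 1 \<and> Lprev + Suc i * k \<ge> nu q (Suc i + 1) - 1) 1)
      in (l, Lprev + Suc i * l))"

definition l_seq :: "(nat \<Rightarrow> nat) \<Rightarrow> nat \<Rightarrow> nat" where
  "l_seq q i = fst (lL q i)"

definition L_seq :: "(nat \<Rightarrow> nat) \<Rightarrow> nat \<Rightarrow> nat" where
  "L_seq q i = (\<Sum>j=1..i. j * l_seq q j)"

definition S_Q :: "(nat \<Rightarrow> nat) \<Rightarrow> (nat \<times> nat \<times> nat) set" where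
  "S_Q q = {(a, b, c). a \<ge> 1 \<and> b \<ge> 1 \<and> c \<ge> 1 \<and> b \<le> l_seq q a \<and> c \<le> a}"

definition phi_Q :: "(nat \<Rightarrow> nat) \<Rightarrow> nat \<times> nat \<times> nat \<Rightarrow> nat" where
  "phi_Q q abc = (case abc of (a, b, c) \<Rightarrow> L_seq q (a - 1) + (b - 1) * a + c)"

definition Q_special :: "(nat \<Rightarrow> nat) \<Rightarrow> (nat \<times> nat \<times> nat \<Rightarrow> int) \<Rightarrow> bool" where
  "Q_special q F \<longleftrightarrow>
     (\<forall>(a, b, c) \<in> S_Q q.
        (c = 1 \<longrightarrow> F (a, b, c) = 0) \<and>
        (c > 1 \<longrightarrow>
           real_of_int (F (a, b, c)) / real (q (phi_Q q (a, b, c)))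
             \<in> {(real c - 1) / real a - 1 / (2 * real a ^ 2) ..
                 (real c - 1) / real a + 1 / (2 * real a ^ 2)}))"

definition E_F :: "(nat \<Rightarrow> nat) \<Rightarrow> (nat \<times> nat \<times> nat \<Rightarrow> int) \<Rightarrow> nat \<Rightarrow> int" where
  "E_F q F n = F (the_inv_into (S_Q q) (phi_Q q) n)"

definition x_F :: "(nat \<Rightarrow> nat) \<Rightarrow> (nat \<times> nat \<times> nat \<Rightarrow> int) \<Rightarrow> real" where
  "x_F q F = (\<Sum>n. real_of_int (E_F q F (n + 1)) / (\<Prod>i=1..n+1. real (q i)))"

definition uniformly_distributed_mod1 :: "(nat \<Rightarrow> real) \<Rightarrow> bool" where
  "uniformly_distributed_mod1 s \<longleftrightarrow>
     (\<forall>a b. 0 \<le> a \<and> a < b \<and> b \<le> 1 \<longrightarrow>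
        (\<lambda>N. real (card {n. n < N \<and> a \<le> frac (s n) \<and> frac (s n) < b}) / real N)
          \<longlonglongrightarrow> b - a)"

definition Q_distribution_normal :: "(nat \<Rightarrow> nat) \<Rightarrow> real \<Rightarrow> bool" where
  "Q_distribution_normal q x \<longleftrightarrow>
     uniformly_distributed_mod1 (\<lambda>n. (\<Prod>i=1..n. real (q i)) * x)"

end

theory Submission
  imports Defs
begin

lemma aux_mul: "l \<ge> 1 \<Longrightarrow> (l - 1) * (x::nat) + x = x * l"
  by (cases l) (auto simp: mult.commute)

locale qs =
  fixes q :: "nat \<Rightarrow> nat"
  assumes basic: "basic_sequence q" and inflim: "infinite_in_limit q"
begin

lemma nu_prop: "nu q j \<ge> 1 \<and> (\<forall>m\<ge>nu q j. q m \<ge> 2 * j ^ 2)"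
proof -
  have "filterlim q at_top sequentially" using inflim by (simp add: infinite_in_limit_def)
  then have "\<forall>\<^sub>F m in sequentially. 2 * j ^ 2 \<le> q m" by (simp add: filterlim_at_top)
  then obtain N where N: "\<forall>m\<ge>N. 2 * j ^ 2 \<le> q m" by (auto simp: eventually_sequentially)
  have "\<exists>N. N \<ge> 1 \<and> (\<forall>m\<ge>N. q m \<ge> 2 * j ^ 2)"
    by (rule exI[of _ "max N 1"]) (use N in auto)
  then show ?thesis unfolding nu_def by (rule LeastI_ex)
qed

lemma nu1: "nu q 1 \<le> 1"
  unfolding nu_def
  by (rule Least_le) (use basic in \<open>auto simp: basic_sequence_def\<close>)

lemma L_Suc: "L_seq q (Suc i) = L_seq q i + Suc i * l_seq q (Suc i)"
  by (simp add: L_seq_def)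

lemma L_pred: "a \<ge> 1 \<Longrightarrow> L_seq q a = L_seq q (a - 1) + a * l_seq q a"
  by (cases a) (simp_all add: L_Suc)

lemma L_0[simp]: "L_seq q 0 = 0" by (simp add: L_seq_def)

lemma snd_lL: "snd (lL q i) = L_seq q i"
  by (induction i) (simp_all add: Let_def L_Suc l_seq_def)

lemma l_pos: "i \<ge> 1 \<Longrightarrow> l_seq q i \<ge> 1"
  by (cases i) (simp_all add: l_seq_def Let_def)

lemma L_nu: assumes i1: "i \<ge> 1" shows "L_seq q i + 1 \<ge> nu q (i+1)"
proof (cases i)
  case 0 then show ?thesis using i1 by simp
next
  case (Suc j)
  show ?thesis
  proof (cases "j = 0")
    case True
    then show ?thesis using Suc by (simp add: L_seq_def l_seq_def Let_def numeral_2_eq_2)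
  next
    case False
    define K where "K = (LEAST k. k \<ge> 1 \<and> L_seq q j + Suc j * k \<ge> nu q (Suc j + 1) - 1)"
    have ex: "\<exists>k. k \<ge> 1 \<and> L_seq q j + Suc j * k \<ge> nu q (Suc j + 1) - 1"
      by (rule exI[of _ "nu q (Suc j + 1) + 1"]) simp
    have K: "K \<ge> 1 \<and> L_seq q j + Suc j * K \<ge> nu q (Suc j + 1) - 1"
      unfolding K_def by (rule LeastI_ex[OF ex])
    have "l_seq q (Suc j) = max K 1"
      using False by (simp add: l_seq_def Let_def snd_lL K_def)
    then have "l_seq q (Suc j) = K" using K by simp
    then show ?thesis using Suc K by (simp add: L_Suc) linarith
  qed
qed

lemma L_mono: "a \<le> b \<Longrightarrow> L_seq q a \<le> L_seq q b"
  unfolding L_seq_def by (rule sum_mono2) auto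

lemma L_ge: "a * (a + 1) \<le> 2 * L_seq q a"
proof (induction a)
  case 0 then show ?case by simp
next
  case (Suc a)
  have h: "Suc a * 1 \<le> Suc a * l_seq q (Suc a)" using l_pos[of "Suc a"] by (intro mult_le_mono2) simp
  have "Suc a * (Suc a + 1) = a * (a + 1) + 2 * (Suc a * 1)" by simp
  also have "\<dots> \<le> 2 * L_seq q a + 2 * (Suc a * l_seq q (Suc a))" using Suc h by linarith
  also have "\<dots> = 2 * L_seq q (Suc a)" by (simp add: L_Suc)
  finally show ?case .
qed

lemma phi_bounds:
  assumes "(a,b,c) \<in> S_Q q"
  shows "L_seq q (a - 1) < phi_Q q (a,b,c)" "phi_Q q (a,b,c) \<le> L_seq q a"
proof -
  from assms have a: "a \<ge> 1" "b \<ge> 1" "c \<ge> 1" "b \<le> l_seq q a" "c \<le> a"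
    by (auto simp: S_Q_def)
  show "L_seq q (a - 1) < phi_Q q (a,b,c)" using a by (simp add: phi_Q_def)
  have "(b - 1) * a + c \<le> (l_seq q a - 1) * a + a"
    using a by (intro add_mono mult_right_mono) auto
  also have "\<dots> = l_seq q a * a" using l_pos[of a] a
    by (cases "l_seq q a") auto
  finally have "(b - 1) * a + c \<le> a * l_seq q a" by (simp add: mult.commute)
  moreover have "L_seq q a = L_seq q (a - 1) + a * l_seq q a"
    using a L_Suc[of "a - 1"] by simp
  ultimately show "phi_Q q (a,b,c) \<le> L_seq q a" by (simp add: phi_Q_def)
qed

lemma phi_inj: "inj_on (phi_Q q) (S_Q q)"
proof (rule inj_onI)
  fix x y assume x: "x \<in> S_Q q" and y: "y \<in> S_Q q" and e: "phi_Q q x = phi_Q q y"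
  obtain a b c where xx: "x = (a,b,c)" by (cases x) auto
  obtain a' b' c' where yy: "y = (a',b',c')" by (cases y) auto
  have A: "a = a'"
  proof (rule ccontr)
    assume "a \<noteq> a'"
    then consider "a < a'" | "a' < a" by linarith
    then show False
    proof cases
      case 1
      have "phi_Q q (a,b,c) \<le> L_seq q a" using phi_bounds x xx by auto
      also have "\<dots> \<le> L_seq q (a' - 1)" using 1 by (intro L_mono) auto
      also have "\<dots> < phi_Q q (a',b',c')" using phi_bounds y yy by auto
      finally show False using e xx yy by simp
    next
      case 2
      have "phi_Q q (a',b',c') \<le> L_seq q a'" using phi_bounds y yy by auto
      also have "\<dots> \<le> L_seq q (a - 1)" using 2 by (intro L_mono) auto
      also have "\<dots> < phi_Q q (a,b,c)" using phi_bounds x xx by auto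
      finally show False using e xx yy by simp
    qed
  qed
  from x y xx yy have r: "a \<ge> 1" "b \<ge> 1" "c \<ge> 1" "c \<le> a" "b' \<ge> 1" "c' \<ge> 1" "c' \<le> a'"
    by (auto simp: S_Q_def)
  from e A xx yy have e2: "(b - 1) * a + (c - 1) = (b' - 1) * a + (c' - 1)"
    using r by (simp add: phi_Q_def)
  have gen: "\<And>x y. y < a \<Longrightarrow> (x*a+y) div a = x \<and> (x*a+y) mod a = y" by simp
  have g1: "c - 1 < a" "c' - 1 < a" using r A by auto
  from gen[OF g1(1), of "b - 1"] gen[OF g1(2), of "b' - 1"] e2
  have "b - 1 = b' - 1" "c - 1 = c' - 1" by metis+
  then have "b = b'" "c = c'" using r by auto
  then show "x = y" using A xx yy by simp
qed

lemma phi_surj: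
  assumes "p \<ge> 1"
  shows "p \<in> phi_Q q ` S_Q q"
proof -
  have ex: "\<exists>a. p \<le> L_seq q a"
  proof
    have "p * (p+1) \<le> 2 * L_seq q p" by (rule L_ge)
    then show "p \<le> L_seq q p" by (cases p) auto
  qed
  define a where "a = (LEAST a. p \<le> L_seq q a)"
  have pa: "p \<le> L_seq q a" unfolding a_def by (rule LeastI_ex[OF ex])
  have a1: "a \<ge> 1" using pa assms by (cases a) auto
  have pa': "L_seq q (a - 1) < p"
  proof -
    have "\<not> p \<le> L_seq q (a - 1)" using a1 unfolding a_def
      by (metis a_def diff_less less_one linorder_not_le not_less_Least zero_less_iff_neq_zero not_one_le_zero)
    then show ?thesis by simp
  qed
  define r where "r = p - L_seq q (a - 1) - 1"
  have La: "L_seq q a = L_seq q (a - 1) + a * l_seq q a"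
    using a1 L_Suc[of "a - 1"] by simp
  have r_lt: "r < a * l_seq q a" using pa pa' La unfolding r_def by linarith
  define b where "b = r div a + 1"
  define c where "c = r mod a + 1"
  have "r div a < l_seq q a" using r_lt a1
    by (simp add: div_less_iff_less_mult mult.commute)
  then have bl: "b \<le> l_seq q a" unfolding b_def by simp
  have cl: "c \<le> a" unfolding c_def using a1
    by (simp add: Suc_leI)
  have "(a,b,c) \<in> S_Q q" using a1 bl cl by (simp add: S_Q_def b_def c_def)
  moreover have "phi_Q q (a,b,c) = p"
    using pa' unfolding phi_Q_def b_def c_def r_def
    by (simp add: mult.commute)
  ultimately show ?thesis by (metis image_eqI)
qed

definition coords :: "nat \<Rightarrow> nat \<times> nat \<times> nat" where
  "coords p = the_inv_into (S_Q q) (phi_Q q) p"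
definition aa where "aa p = fst (coords p)"
definition bb where "bb p = fst (snd (coords p))"
definition cc where "cc p = snd (snd (coords p))"

lemma coords_in: "p \<ge> 1 \<Longrightarrow> coords p \<in> S_Q q \<and> phi_Q q (coords p) = p"
  unfolding coords_def using phi_inj phi_surj
  by (simp add: the_inv_into_into f_the_inv_into_f)

lemma coords_phi: "x \<in> S_Q q \<Longrightarrow> coords (phi_Q q x) = x"
  unfolding coords_def using phi_inj by (simp add: the_inv_into_f_f)

lemma coords_eq: "p \<ge> 1 \<Longrightarrow> coords p = (aa p, bb p, cc p)"
  by (simp add: aa_def bb_def cc_def)

lemma coords_basic:
  assumes "p \<ge> 1"
  shows "aa p \<ge> 1" "cc p \<ge> 1" "cc p \<le> aa p" "bb p \<ge> 1" "bb p \<le> l_seq q (aa p)"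
    "phi_Q q (aa p, bb p, cc p) = p" "(aa p, bb p, cc p) \<in> S_Q q"
  using coords_in[OF assms] coords_eq[OF assms] by (auto simp: S_Q_def)

lemma p_bounds:
  assumes "p \<ge> 1"
  shows "L_seq q (aa p - 1) < p" "p \<le> L_seq q (aa p)" "cc p \<le> p"
  using phi_bounds[OF coords_basic(7)[OF assms]] coords_basic[OF assms]
  by (auto simp: phi_Q_def)

lemma q_big:
  assumes "p \<ge> 1"
  shows "q p \<ge> 2 * (aa p)^2"
proof -
  have "nu q (aa p) \<le> p"
  proof (cases "aa p = 1")
    case True then show ?thesis using nu1 assms by simp
  next
    case False
    then have "aa p - 1 \<ge> 1" using coords_basic(1)[OF assms] by simp
    from L_nu[OF this] have "nu q (aa p) \<le> L_seq q (aa p - 1) + 1"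
      using False coords_basic(1)[OF assms] by simp
    then show ?thesis using p_bounds(1)[OF assms] by simp
  qed
  then show ?thesis using nu_prop[of "aa p"] by blast
qed

lemma coords_1: "aa 1 = 1" "cc 1 = 1"
proof -
  have "(1,1,1) \<in> S_Q q" using l_pos[of 1] by (simp add: S_Q_def)
  moreover have "phi_Q q (1,1,1) = 1" by (simp add: phi_Q_def)
  ultimately have "coords 1 = (1,1,1)" using coords_phi by metis
  then show "aa 1 = 1" "cc 1 = 1" by (simp_all add: aa_def cc_def)
qed

lemma step_gt:
  assumes N: "N \<ge> 1" and c: "cc (N+1) > 1"
  shows "aa N = aa (N+1)" "cc N = cc (N+1) - 1"
proof -
  let ?a = "aa (N+1)" and ?b = "bb (N+1)" and ?c = "cc (N+1)"
  have "(?a, ?b, ?c - 1) \<in> S_Q q" using coords_basic[of "N+1"] c by (auto simp: S_Q_def)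
  moreover have "phi_Q q (?a, ?b, ?c - 1) = N" using coords_basic(6)[of "N+1"] c
    by (simp add: phi_Q_def)
  ultimately have "coords N = (?a, ?b, ?c - 1)" using coords_phi by metis
  then show "aa N = aa (N+1)" "cc N = cc (N+1) - 1" by (simp_all add: aa_def cc_def)
qed

lemma step_eq:
  assumes N: "N \<ge> 1" and c: "cc (N+1) = 1"
  shows "cc N = aa N"
proof -
  let ?a = "aa (N+1)" and ?b = "bb (N+1)" and ?c = "cc (N+1)"
  have ph: "phi_Q q (?a, ?b, 1) = N + 1" using coords_basic(6)[of "N+1"] c by simp
  have a1: "?a \<ge> 1" "?b \<ge> 1" "?b \<le> l_seq q ?a" using coords_basic[of "N+1"] by auto
  show ?thesis
  proof (cases "?b = 1")
    case False
    have "(?a, ?b - 1, ?a) \<in> S_Q q" using a1 False by (auto simp: S_Q_def)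
    moreover have "phi_Q q (?a, ?b - 1, ?a) = N"
    proof -
      obtain k where k: "?b = Suc (Suc k)" using False a1
        by (metis One_nat_def Suc_le_D le_SucE not0_implies_Suc le_0_eq)
      have "(?b - 1) * ?a = (?b - 1 - 1) * ?a + ?a" using k by simp
      then show ?thesis using ph by (simp add: phi_Q_def)
    qed
    ultimately have "coords N = (?a, ?b - 1, ?a)" using coords_phi by metis
    then show ?thesis by (simp add: aa_def cc_def)
  next
    case True
    then have NL: "N = L_seq q (?a - 1)" using ph by (simp add: phi_Q_def)
    have a2: "?a \<ge> 2"
    proof (rule ccontr)
      assume "\<not> ?a \<ge> 2" then have "?a = 1" using a1 by simp
      then show False using NL N by simp
    qed
    let ?a' = "?a - 1"
    have "(?a', l_seq q ?a', ?a') \<in> S_Q q" using a2 l_pos[of ?a'] by (auto simp: S_Q_def)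
    moreover have "phi_Q q (?a', l_seq q ?a', ?a') = N"
    proof -
      have "(l_seq q ?a' - 1) * ?a' + ?a' = ?a' * l_seq q ?a'" using l_pos[of ?a'] a2
        by (intro aux_mul) auto
      moreover have "L_seq q ?a' = L_seq q (?a' - 1) + ?a' * l_seq q ?a'"
        using a2 L_pred[of ?a'] by simp
      ultimately show ?thesis using NL by (simp add: phi_Q_def)
    qed
    ultimately have "coords N = (?a', l_seq q ?a', ?a')" using coords_phi by metis
    then show ?thesis by (simp add: aa_def cc_def)
  qed
qed

lemma block:
  assumes N: "N \<ge> 1" and c: "cc N = aa N" and j: "j < aa N"
  shows "aa (N - aa N + j + 1) = aa N" "cc (N - aa N + j + 1) = j + 1"
proof -
  let ?a = "aa N" and ?b = "bb N"
  have "(?a, ?b, j + 1) \<in> S_Q q" using coords_basic[OF N] j by (auto simp: S_Q_def)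
  moreover have "phi_Q q (?a, ?b, j + 1) = N - aa N + j + 1"
    using coords_basic(6)[OF N] c j by (auto simp: phi_Q_def)
  ultimately have "coords (N - aa N + j + 1) = (?a, ?b, j + 1)" using coords_phi by metis
  then show "aa (N - aa N + j + 1) = aa N" "cc (N - aa N + j + 1) = j + 1"
    by (simp_all add: aa_def cc_def)
qed

end

locale qsF = qs +
  fixes F :: "nat \<times> nat \<times> nat \<Rightarrow> int"
  assumes spec: "Q_special q F"
begin

definition P :: "nat \<Rightarrow> real" where "P n = (\<Prod>i=1..n. real (q i))"
definition E :: "nat \<Rightarrow> real" where "E p = real_of_int (E_F q F p)"
definition f :: "nat \<Rightarrow> real" where "f k = E (k+1) / P (k+1)"
definition R :: "nat \<Rightarrow> real" where "R n = (\<Sum>i. f (i + n))"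
definition T :: "nat \<Rightarrow> real" where "T n = P n * R n"

lemma q2: "p \<ge> 1 \<Longrightarrow> real (q p) \<ge> 2"
  using basic by (simp add: basic_sequence_def)

lemma P_Suc: "P (Suc n) = P n * real (q (Suc n))"
  by (simp add: P_def prod.cl_ivl_Suc)

lemma P_0[simp]: "P 0 = 1" by (simp add: P_def)

lemma P_ge: "P n \<ge> 2 ^ n"
proof (induction n)
  case 0 then show ?case by simp
next
  case (Suc n)
  have P0: "0 \<le> P n" using Suc.IH by (smt (verit) zero_le_power)
  have "(2::real) ^ Suc n = 2 ^ n * 2" by simp
  also have "\<dots> \<le> P n * real (q (Suc n))"
    using Suc q2[of "Suc n"] P0 by (intro mult_mono) auto
  finally show ?case by (simp add: P_Suc)
qed

lemma P_pos: "P n > 0"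
  using P_ge[of n] by (smt (verit) zero_less_power)

lemma invP_lim: "(\<lambda>n. 1 / P n) \<longlonglongrightarrow> 0"
proof (rule tendsto_sandwich[where f="\<lambda>_. 0" and h="\<lambda>n. (1/2) ^ n"])
  show "\<forall>\<^sub>F n in sequentially. 0 \<le> 1 / P n"
    using P_pos by (intro always_eventually allI) (simp add: less_imp_le)
  show "\<forall>\<^sub>F n in sequentially. 1 / P n \<le> (1/2) ^ n"
  proof (rule always_eventually, rule allI)
    fix n
    have "1 / P n \<le> 1 / 2 ^ n" using P_ge[of n] P_pos[of n]
      by (intro divide_left_mono) auto
    then show "1 / P n \<le> (1/2) ^ n" by (simp add: power_one_over)
  qed
  show "(\<lambda>n. 0::real) \<longlonglongrightarrow> 0" by simp
  show "(\<lambda>n. (1/2::real) ^ n) \<longlonglongrightarrow> 0" by (rule LIMSEQ_power_zero) simp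
qed

lemma E_coords:
  assumes p: "p \<ge> 1"
  shows "cc p = 1 \<Longrightarrow> E p = 0"
    and "cc p > 1 \<Longrightarrow> E p / real (q p) \<in> {(real (cc p) - 1) / real (aa p) - 1 / (2 * real (aa p) ^ 2) ..
                 (real (cc p) - 1) / real (aa p) + 1 / (2 * real (aa p) ^ 2)}"
proof -
  have S: "(aa p, bb p, cc p) \<in> S_Q q" and ph: "phi_Q q (aa p, bb p, cc p) = p"
    using coords_basic[OF p] by auto
  have EF: "E p = real_of_int (F (aa p, bb p, cc p))"
    unfolding E_def E_F_def using coords_eq[OF p] by (simp add: coords_def)
  from spec S have H: "(cc p = 1 \<longrightarrow> F (aa p, bb p, cc p) = 0) \<and>
        (cc p > 1 \<longrightarrow>
           real_of_int (F (aa p, bb p, cc p)) / real (q (phi_Q q (aa p, bb p, cc p)))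
             \<in> {(real (cc p) - 1) / real (aa p) - 1 / (2 * real (aa p) ^ 2) ..
                 (real (cc p) - 1) / real (aa p) + 1 / (2 * real (aa p) ^ 2)})"
    unfolding Q_special_def by blast
  show "cc p = 1 \<Longrightarrow> E p = 0" using H EF by simp
  show "cc p > 1 \<Longrightarrow> E p / real (q p) \<in> {(real (cc p) - 1) / real (aa p) - 1 / (2 * real (aa p) ^ 2) ..
                 (real (cc p) - 1) / real (aa p) + 1 / (2 * real (aa p) ^ 2)}"
    using H EF ph by simp
qed

lemma E_approx:
  assumes p: "p \<ge> 1"
  shows "\<bar>E p / real (q p) - (real (cc p) - 1) / real (aa p)\<bar> \<le> 1 / (2 * real (aa p) ^ 2)"
proof (cases "cc p = 1")
  case True then show ?thesis using E_coords(1)[OF p] by simp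
next
  case False
  then have "cc p > 1" using coords_basic(2)[OF p] by simp
  from E_coords(2)[OF p this] show ?thesis by (simp add: abs_le_iff)
qed

lemma E_bounds:
  assumes p: "p \<ge> 1"
  shows "0 \<le> E p" "E p \<le> real (q p) - 1"
proof -
  have q0: "real (q p) > 0" using q2[OF p] by simp
  have a1: "real (aa p) \<ge> 1" using coords_basic(1)[OF p] by simp
  have "0 \<le> E p \<and> E p \<le> real (q p) - 1"
  proof (cases "cc p = 1")
    case True then show ?thesis using E_coords(1)[OF p] q2[OF p] by simp
  next
    case False
    then have c1: "cc p > 1" using coords_basic(2)[OF p] by simp
    let ?a = "real (aa p)" and ?c = "real (cc p)"
    have ca: "?c \<le> ?a" using coords_basic(3)[OF p] by simp
    have a2: "?a \<ge> 2" using c1 coords_basic(3)[OF p] by simp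
    from E_coords(2)[OF p c1]
    have lo: "(?c - 1) / ?a - 1 / (2 * ?a ^ 2) \<le> E p / real (q p)"
      and hi: "E p / real (q p) \<le> (?c - 1) / ?a + 1 / (2 * ?a ^ 2)" by auto
    have "(?c - 1) / ?a \<ge> 1 / ?a" using c1 a2 by (intro divide_right_mono) auto
    moreover have "1 / (2 * ?a ^ 2) < 1 / ?a" using a2
      by (simp add: field_simps power2_eq_square)
    ultimately have "E p / real (q p) > 0" using lo by linarith
    then have pos: "E p > 0" using q0 by (simp add: zero_less_divide_iff)
    have "(?c - 1) / ?a \<le> (?a - 1) / ?a" using ca a2 by (intro divide_right_mono) auto
    also have "\<dots> = 1 - 1 / ?a" using a2 by (simp add: field_simps)
    finally have "E p / real (q p) < 1" using hi \<open>1 / (2 * ?a ^ 2) < 1 / ?a\<close> by linarith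
    then have "E p < real (q p)" using q0 by (simp add: divide_less_eq)
    then have "E_F q F p < int (q p)" unfolding E_def by linarith
    then have "E_F q F p \<le> int (q p) - 1" by linarith
    then have "real_of_int (E_F q F p) \<le> real_of_int (int (q p) - 1)" by (simp only: of_int_le_iff)
    then have "E p \<le> real (q p) - 1" by (simp add: E_def)
    then show ?thesis using pos by simp
  qed
  then show "0 \<le> E p" "E p \<le> real (q p) - 1" by auto
qed

end

context qsF
begin

lemma f_bounds: "0 \<le> f k" "f k \<le> 1 / P k - 1 / P (Suc k)"
proof -
  have qp: "real (q (Suc k)) \<ge> 2" using q2[of "Suc k"] by simp
  have Pk: "P k > 0" by (rule P_pos)
  have e: "0 \<le> E (Suc k)" "E (Suc k) \<le> real (q (Suc k)) - 1" using E_bounds[of "Suc k"] by auto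
  show "0 \<le> f k" unfolding f_def using e P_pos[of "Suc k"] by simp
  have "f k = E (Suc k) / (P k * real (q (Suc k)))" by (simp add: f_def P_Suc)
  also have "\<dots> \<le> (real (q (Suc k)) - 1) / (P k * real (q (Suc k)))"
    using e Pk qp by (intro divide_right_mono) auto
  also have "\<dots> = 1 / P k - 1 / P (Suc k)" using Pk qp by (simp add: P_Suc field_simps)
  finally show "f k \<le> 1 / P k - 1 / P (Suc k)" .
qed

lemma tele: "(\<lambda>i. 1 / P (i + n) - 1 / P (Suc i + n)) sums (1 / P n)"
proof -
  have "(\<lambda>i. 1 / P (i + n)) \<longlonglongrightarrow> 0" using LIMSEQ_ignore_initial_segment[OF invP_lim] by simp
  from telescope_sums'[OF this] show ?thesis by simp
qed

lemma summable_f: "summable f"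
proof (rule summable_comparison_test')
  show "summable (\<lambda>k. 1 / P k - 1 / P (Suc k))" using sums_summable[OF tele[of 0]] by simp
  show "norm (f k) \<le> 1 / P k - 1 / P (Suc k)" for k using f_bounds[of k] by simp
qed

lemma summable_fn: "summable (\<lambda>i. f (i + n))"
  using summable_ignore_initial_segment[OF summable_f] by simp

lemma R_bounds: "0 \<le> R n" "R n \<le> 1 / P n"
proof -
  show "0 \<le> R n" unfolding R_def using summable_fn f_bounds by (intro suminf_nonneg) auto
  have "R n \<le> (\<Sum>i. 1 / P (i + n) - 1 / P (Suc i + n))"
    unfolding R_def using summable_fn sums_summable[OF tele] f_bounds
    by (intro suminf_le) auto
  also have "\<dots> = 1 / P n" using tele sums_unique by metis
  finally show "R n \<le> 1 / P n" .
qed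

lemma R_split: "R n = f n + R (Suc n)"
proof -
  have "(\<Sum>i. f (Suc i + n)) = R n - f (0 + n)" unfolding R_def
    using suminf_split_head[OF summable_fn[of n]] by simp
  then show ?thesis by (simp add: R_def)
qed

lemma x_eq: "x_F q F = suminf f"
  unfolding x_F_def f_def E_def P_def by simp

lemma x_split: "x_F q F = (\<Sum>k<n. f k) + R n"
  unfolding x_eq R_def using suminf_split_initial_segment[OF summable_f, of n] by linarith

lemma int_part: "P n * (\<Sum>k<n. f k) \<in> \<int>"
proof (induction n)
  case 0 then show ?case by simp
next
  case (Suc n)
  have "P (Suc n) * (\<Sum>k<Suc n. f k) = real (q (Suc n)) * (P n * (\<Sum>k<n. f k)) + P (Suc n) * f n"
    by (simp add: P_Suc algebra_simps)
  also have "P (Suc n) * f n = E (Suc n)" using P_pos[of "Suc n"] by (simp add: f_def)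
  finally show ?case using Suc by (simp add: E_def)
qed

lemma T_eq: "T n = E (Suc n) / real (q (Suc n)) + P (Suc n) * R (Suc n) / real (q (Suc n))"
proof -
  have qp: "real (q (Suc n)) > 0" using q2[of "Suc n"] by simp
  have Pk: "P n > 0" by (rule P_pos)
  show ?thesis unfolding T_def using R_split[of n] qp Pk
    by (simp add: f_def P_Suc field_simps)
qed

lemma T_range: "E (Suc n) / real (q (Suc n)) \<le> T n" "T n \<le> E (Suc n) / real (q (Suc n)) + 1 / real (q (Suc n))"
proof -
  have qp: "real (q (Suc n)) > 0" using q2[of "Suc n"] by simp
  have a: "0 \<le> P (Suc n) * R (Suc n)" using R_bounds P_pos[of "Suc n"] by simp
  have b: "P (Suc n) * R (Suc n) \<le> 1" using R_bounds(2)[of "Suc n"] P_pos[of "Suc n"]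
    by (simp add: field_simps)
  show "E (Suc n) / real (q (Suc n)) \<le> T n" unfolding T_eq using a qp by simp
  show "T n \<le> E (Suc n) / real (q (Suc n)) + 1 / real (q (Suc n))" unfolding T_eq using b qp
    by (simp add: divide_right_mono)
qed

lemma T_main:
  shows "frac ((\<Prod>i=1..n. real (q i)) * x_F q F) = T n"
    and "\<bar>T n - (real (cc (Suc n)) - 1) / real (aa (Suc n))\<bar> \<le> 1 / real (aa (Suc n)) ^ 2"
proof -
  let ?a = "real (aa (Suc n))" and ?c = "real (cc (Suc n))" and ?q = "real (q (Suc n))"
  have a1: "?a \<ge> 1" using coords_basic(1)[of "Suc n"] by simp
  have qa: "?q \<ge> 2 * ?a ^ 2" using q_big[of "Suc n"] by (simp flip: of_nat_power)
  have qp: "?q \<ge> 2" using q2[of "Suc n"] by simp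
  have pos: "0 < ?q * (2 * ?a^2)" using qp a1 by (intro mult_pos_pos) auto
  have iq: "1 / ?q \<le> 1 / (2 * ?a ^ 2)" using qa pos by (intro divide_left_mono) auto
  have ap: "\<bar>E (Suc n) / ?q - (?c - 1) / ?a\<bar> \<le> 1 / (2 * ?a ^ 2)" using E_approx[of "Suc n"] by simp
  have ap1: "E (Suc n) / ?q \<ge> (?c - 1) / ?a - 1 / (2 * ?a ^ 2)"
    and ap2: "E (Suc n) / ?q \<le> (?c - 1) / ?a + 1 / (2 * ?a ^ 2)" using ap by (auto simp: abs_le_iff)
  have half: "1 / (2 * ?a ^ 2) + 1 / (2 * ?a ^ 2) = 1 / ?a ^ 2" by (simp add: field_simps)
  show "\<bar>T n - (?c - 1) / ?a\<bar> \<le> 1 / ?a ^ 2"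
    using T_range[of n] ap1 ap2 iq half unfolding abs_le_iff by linarith
  have "0 \<le> E (Suc n) / ?q" using E_bounds(1)[of "Suc n"] qp by simp
  then have T0: "0 \<le> T n" using T_range(1)[of n] by linarith
  have T1: "T n < 1"
  proof (cases "cc (Suc n) = 1")
    case True
    then have "T n \<le> 1 / ?q" using T_range(2)[of n] E_coords(1)[of "Suc n"] by simp
    also have "\<dots> \<le> 1/2" using qp by (intro divide_left_mono) auto
    finally show ?thesis by simp
  next
    case False
    then have c1: "cc (Suc n) > 1" using coords_basic(2)[of "Suc n"] by simp
    have ca: "?c \<le> ?a" using coords_basic(3)[of "Suc n"] by simp
    have a2: "?a \<ge> 2" using c1 coords_basic(3)[of "Suc n"] by simp
    have "T n \<le> (?c - 1) / ?a + 1 / ?a ^ 2"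
      using T_range[of n] ap1 ap2 iq half by linarith
    also have "(?c - 1) / ?a \<le> (?a - 1) / ?a" using ca a2 by (intro divide_right_mono) auto
    also have "(?a - 1) / ?a + 1 / ?a ^ 2 < 1" using a2
      by (simp add: field_simps power2_eq_square)
    finally show ?thesis by simp
  qed
  have "(\<Prod>i=1..n. real (q i)) * x_F q F = P n * (\<Sum>k<n. f k) + T n"
    by (simp add: x_split[of n] T_def P_def algebra_simps)
  then show "frac ((\<Prod>i=1..n. real (q i)) * x_F q F) = T n"
    using int_part[of n] T0 T1 by (simp add: frac_add_int_left frac_eq)
qed

end

lemma sum_ind: "(\<Sum>j<(N::nat). if Q j then 1 else (0::real)) = real (card {j. j < N \<and> Q j})"
proof (induction N)
  case 0 then show ?case by simp
next
  case (Suc N)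
  show ?case
  proof (cases "Q N")
    case True
    have "{j. j < Suc N \<and> Q j} = insert N {j. j < N \<and> Q j}" using True by auto
    then show ?thesis using Suc True by simp
  next
    case False
    have "{j. j < Suc N \<and> Q j} = {j. j < N \<and> Q j}" using False less_Suc_eq by auto
    then show ?thesis using Suc False by simp
  qed
qed

lemma cnt_upper: "real (card {j::nat. j < a \<and> x \<le> real j \<and> real j < y}) \<le> max 0 (y - x + 1)"
proof -
  define S where "S = {j::nat. j < a \<and> x \<le> real j \<and> real j < y}"
  have fin: "finite S" unfolding S_def by simp
  have "real (card S) \<le> max 0 (y - x + 1)"
  proof (cases "S = {}")
    case True then show ?thesis by simp
  next
    case False
    define m where "m = Min S"
    define M where "M = Max S"
    have mi: "m \<in> S" unfolding m_def by (rule Min_in[OF fin False])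
    have ma: "M \<in> S" unfolding M_def by (rule Max_in[OF fin False])
    have sub: "S \<subseteq> {m..M}"
    proof
      fix j assume "j \<in> S"
      then show "j \<in> {m..M}" using Min_le[OF fin] Max_ge[OF fin] unfolding m_def M_def
        by (metis atLeastAtMost_iff)
    qed
    have mM: "m \<le> M" using sub mi by auto
    have "card S \<le> card {m..M}" by (rule card_mono[OF _ sub]) simp
    also have "card {m..M} = M + 1 - m" by simp
    finally have "real (card S) \<le> real (M + 1 - m)" by (simp only: of_nat_le_iff)
    also have "real (M + 1 - m) = real M + 1 - real m" using mM by (simp add: of_nat_diff)
    also have "\<dots> \<le> y - x + 1"
    proof -
      have "real M < y" using ma unfolding S_def by (simp only: mem_Collect_eq)
      moreover have "x \<le> real m" using mi unfolding S_def by (simp only: mem_Collect_eq)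
      ultimately show ?thesis by linarith
    qed
    finally show ?thesis by simp
  qed
  then show ?thesis unfolding S_def .
qed

lemma cnt_lower:
  assumes x0: "0 \<le> x" and ya: "y \<le> real a"
  shows "real (card {j::nat. j < a \<and> x \<le> real j \<and> real j < y}) \<ge> y - x - 1"
proof -
  define S where "S = {j::nat. j < a \<and> x \<le> real j \<and> real j < y}"
  have "real (card S) \<ge> y - x - 1"
  proof (cases "y \<le> x")
    case True then show ?thesis by simp
  next
    case False
    define m where "m = nat \<lceil>x\<rceil>"
    define M where "M = nat \<lceil>y\<rceil>"
    have cx: "real_of_int \<lceil>x\<rceil> < x + 1" "x \<le> real_of_int \<lceil>x\<rceil>" using ceiling_correct[of x] by auto
    have cy: "y \<le> real_of_int \<lceil>y\<rceil>" by simp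
    have cx0: "\<lceil>x\<rceil> \<ge> 0" using x0 by simp
    have cy0: "\<lceil>y\<rceil> \<ge> 0" using x0 False by simp
    have m: "real m = real_of_int \<lceil>x\<rceil>" unfolding m_def using cx0 by simp
    have M: "real M = real_of_int \<lceil>y\<rceil>" unfolding M_def using cy0 by simp
    have sub: "{m..<M} \<subseteq> S"
    proof
      fix j assume j: "j \<in> {m..<M}"
      have "m \<le> j" using j by simp
      then have "real m \<le> real j" by (simp only: of_nat_le_iff)
      then have 1: "x \<le> real j" using m cx by linarith
      have "j < M" using j by simp
      then have "real j < real M" by (simp only: of_nat_less_iff)
      then have "real_of_int (int j) < real_of_int \<lceil>y\<rceil>" using M by simp
      then have "int j < \<lceil>y\<rceil>" by (simp only: of_int_less_iff)
      then have 2: "real j < y" using less_ceiling_iff[of "int j" y] by simp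
      then have "real j < real a" using ya by linarith
      then have "j < a" by (simp only: of_nat_less_iff)
      then show "j \<in> S" using 1 2 unfolding S_def by simp
    qed
    have "card {m..<M} \<le> card S" by (rule card_mono[OF _ sub]) (simp add: S_def)
    then have "real (M - m) \<le> real (card S)" by (simp only: card_atLeastLessThan of_nat_le_iff)
    moreover have "real M - real m \<le> real (M - m)" by linarith
    ultimately show ?thesis using m M cx cy by linarith
  qed
  then show ?thesis unfolding S_def .
qed

locale qsI = qsF +
  fixes \<alpha> \<beta> :: real
  assumes a0: "0 \<le> \<alpha>" and ab: "\<alpha> < \<beta>" and b1: "\<beta> \<le> 1"
begin

definition Ind :: "nat \<Rightarrow> real" where "Ind n = (if \<alpha> \<le> T n \<and> T n < \<beta> then 1 else 0)"
definition ee :: "nat \<Rightarrow> real" where "ee N = (\<Sum>n<N. Ind n - (\<beta> - \<alpha>))"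
definition hh :: "nat \<Rightarrow> real" where "hh N = (\<Sum>n\<in>{N - cc N..<N}. Ind n - (\<beta> - \<alpha>))"
definition Sm :: "nat \<Rightarrow> real" where "Sm N = (\<Sum>p\<in>{1..N}. 1 / real (aa p))"

lemma T_scaled:
  "\<bar>real (aa (Suc n)) * T n - (real (cc (Suc n)) - 1)\<bar> \<le> 1 / real (aa (Suc n))"
proof -
  let ?a = "real (aa (Suc n))" and ?c = "real (cc (Suc n))"
  have a1: "?a \<ge> 1" using coords_basic(1)[of "Suc n"] by simp
  have e1: "?a * (T n - (?c - 1) / ?a) = ?a * T n - (?c - 1)" using a1 by (simp add: field_simps)
  have "\<bar>?a * T n - (?c - 1)\<bar> = ?a * \<bar>T n - (?c - 1) / ?a\<bar>"
    using a1 by (simp only: e1[symmetric] abs_mult)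
  also have "\<dots> \<le> ?a * (1 / ?a ^ 2)" using T_main(2)[of n] a1 by (intro mult_left_mono) auto
  also have "\<dots> = 1 / ?a" using a1 by (simp add: power2_eq_square)
  finally show ?thesis .
qed

lemma Ind_upper:
  assumes "\<bar>a * T n - j\<bar> \<le> 1 / a" "a > 0"
  shows "Ind n \<le> (if a * \<alpha> - 1 / a \<le> j \<and> j < a * \<beta> + 1 / a then 1 else 0)"
proof (cases "\<alpha> \<le> T n \<and> T n < \<beta>")
  case True
  have "a * \<alpha> \<le> a * T n" using True assms(2) by (intro mult_left_mono) auto
  moreover have "a * T n < a * \<beta>" using True assms(2) by (intro mult_strict_left_mono) auto
  ultimately have "a * \<alpha> - 1 / a \<le> j \<and> j < a * \<beta> + 1 / a" using assms(1) unfolding abs_le_iff by linarith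
  then show ?thesis by (simp add: Ind_def)
next
  case False
  then have "Ind n = 0" by (simp add: Ind_def)
  then show ?thesis by simp
qed

lemma Ind_lower:
  assumes "\<bar>a * T n - j\<bar> \<le> 1 / a" "a > 0"
  shows "(if a * \<alpha> + 1 / a \<le> j \<and> j < a * \<beta> - 1 / a then 1 else 0) \<le> Ind n"
proof (cases "a * \<alpha> + 1 / a \<le> j \<and> j < a * \<beta> - 1 / a")
  case True
  have "a * \<alpha> \<le> a * T n" "a * T n < a * \<beta>" using True assms(1) unfolding abs_le_iff by linarith+
  then have "\<alpha> \<le> T n" "T n < \<beta>" using assms(2) by auto
  then show ?thesis by (simp add: Ind_def)
next
  case False
  show ?thesis unfolding if_not_P[OF False] by (simp add: Ind_def)
qed

lemma block_bound:
  assumes N: "N \<ge> 1" and c: "cc N = aa N"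
  shows "\<bar>hh N\<bar> \<le> 3"
proof -
  define a where "a = aa N"
  define k where "k = N - a"
  have a1: "a \<ge> 1" unfolding a_def using coords_basic(1)[OF N] .
  have aN: "a \<le> N" unfolding a_def using p_bounds(3)[OF N] c by simp
  have ra: "real a \<ge> 1" using a1 by simp
  have "hh N = (\<Sum>n\<in>{0+k..<a+k}. Ind n - (\<beta> - \<alpha>))"
    unfolding hh_def k_def using c aN by (simp add: a_def)
  also have "\<dots> = (\<Sum>j\<in>{0..<a}. Ind (j + k) - (\<beta> - \<alpha>))" by (rule sum.shift_bounds_nat_ivl)
  also have "\<dots> = (\<Sum>j<a. Ind (j + k)) - real a * (\<beta> - \<alpha>)"
    by (simp add: sum_subtractf lessThan_atLeast0)
  finally have hN: "hh N = (\<Sum>j<a. Ind (j + k)) - real a * (\<beta> - \<alpha>)" .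
  have sc: "\<bar>real a * T (j + k) - real j\<bar> \<le> 1 / real a" if j: "j < a" for j
  proof -
    have "Suc (j + k) = N - aa N + j + 1" unfolding k_def a_def by simp
    then have "aa (Suc (j + k)) = a" "cc (Suc (j + k)) = j + 1"
      using block[OF N c, of j] j unfolding a_def by (simp_all only:)
    then show ?thesis using T_scaled[of "j + k"] by simp
  qed
  have up: "(\<Sum>j<a. Ind (j + k)) \<le> (\<Sum>j<a. if real a * \<alpha> - 1 / real a \<le> real j \<and> real j < real a * \<beta> + 1 / real a then 1 else 0)"
    using sc ra by (intro sum_mono Ind_upper) auto
  also have "\<dots> = real (card {j. j < a \<and> real a * \<alpha> - 1 / real a \<le> real j \<and> real j < real a * \<beta> + 1 / real a})"
    by (rule sum_ind)
  also have "\<dots> \<le> max 0 ((real a * \<beta> + 1 / real a) - (real a * \<alpha> - 1 / real a) + 1)" by (rule cnt_upper)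
  also have "\<dots> = real a * (\<beta> - \<alpha>) + 2 / real a + 1"
  proof -
    have "real a * (\<beta> - \<alpha>) \<ge> 0" using ab by simp
    moreover have "1 / real a \<ge> 0" by simp
    moreover have "(real a * \<beta> + 1 / real a) - (real a * \<alpha> - 1 / real a) + 1
       = real a * (\<beta> - \<alpha>) + 2 * (1 / real a) + 1" by (simp add: algebra_simps)
    ultimately have pos: "0 \<le> (real a * \<beta> + 1 / real a) - (real a * \<alpha> - 1 / real a) + 1"
      by linarith
    show ?thesis by (subst max_absorb2[OF pos]) (simp add: algebra_simps)
  qed
  finally have up': "(\<Sum>j<a. Ind (j + k)) \<le> real a * (\<beta> - \<alpha>) + 2 / real a + 1" .
  have "real (card {j. j < a \<and> real a * \<alpha> + 1 / real a \<le> real j \<and> real j < real a * \<beta> - 1 / real a})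
      \<ge> (real a * \<beta> - 1 / real a) - (real a * \<alpha> + 1 / real a) - 1"
  proof (rule cnt_lower)
    show "0 \<le> real a * \<alpha> + 1 / real a" using a0 by simp
    have "real a * \<beta> \<le> real a" using b1 ra by (simp add: mult_left_le)
    then show "real a * \<beta> - 1 / real a \<le> real a" using ra by (smt (verit) divide_nonneg_nonneg)
  qed
  also have "real (card {j. j < a \<and> real a * \<alpha> + 1 / real a \<le> real j \<and> real j < real a * \<beta> - 1 / real a})
     = (\<Sum>j<a. if real a * \<alpha> + 1 / real a \<le> real j \<and> real j < real a * \<beta> - 1 / real a then 1 else 0)"
    by (rule sum_ind[symmetric])
  also have "\<dots> \<le> (\<Sum>j<a. Ind (j + k))"
    using sc ra by (intro sum_mono Ind_lower) auto
  finally have lo': "(\<Sum>j<a. Ind (j + k)) \<ge> real a * (\<beta> - \<alpha>) - 2 / real a - 1"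
    by (simp add: algebra_simps)
  have "2 / real a \<le> 2" using ra by (simp add: divide_le_eq)
  then show ?thesis using hN up' lo' unfolding abs_le_iff by linarith
qed

end

context qsI
begin

lemma ee_Suc: "ee (Suc n) = ee n + (Ind n - (\<beta> - \<alpha>))" by (simp add: ee_def)
lemma Sm_Suc: "Sm (Suc n) = Sm n + 1 / real (aa (Suc n))" by (simp add: Sm_def)

lemma inv:
  assumes "N \<ge> 1"
  shows "\<bar>ee N - hh N\<bar> \<le> 3 * (Sm N - real (cc N) / real (aa N))"
  using assms
proof (induction N rule: nat_induct_at_least)
  case base
  have "{1 - cc 1..<1} = {0}" using coords_1 by simp
  then have "hh 1 = Ind 0 - (\<beta> - \<alpha>)" unfolding hh_def by simp
  moreover have "ee 1 = Ind 0 - (\<beta> - \<alpha>)" by (simp add: ee_def)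
  moreover have "Sm 1 = 1" by (simp add: Sm_def coords_1 coords_1[unfolded One_nat_def])
  ultimately show ?case by (simp add: coords_1 coords_1[unfolded One_nat_def])
next
  case (Suc n)
  have a1: "real (aa (Suc n)) \<ge> 1" using coords_basic(1)[of "Suc n"] by simp
  show ?case
  proof (cases "cc (Suc n) = 1")
    case True
    have h: "hh (Suc n) = Ind n - (\<beta> - \<alpha>)" using True by (simp add: hh_def)
    have ce: "cc n = aa n" using step_eq[of n] Suc.hyps True by simp
    have an: "real (aa n) \<ge> 1" using coords_basic(1)[of n] Suc.hyps by simp
    have "real (cc n) / real (aa n) = 1" using ce an by simp
    then have ih: "\<bar>ee n - hh n\<bar> \<le> 3 * (Sm n - 1)" using Suc.IH by simp
    have bb: "\<bar>hh n\<bar> \<le> 3" using block_bound[OF Suc.hyps ce] .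
    have "\<bar>ee (Suc n) - hh (Suc n)\<bar> = \<bar>ee n\<bar>" using h ee_Suc[of n] by simp
    also have "\<dots> \<le> 3 * Sm n"
    proof -
      have ih': "\<bar>ee n - hh n\<bar> \<le> 3 * Sm n - 3" using ih by simp
      have "\<bar>ee n\<bar> \<le> \<bar>ee n - hh n\<bar> + \<bar>hh n\<bar>" using abs_triangle_ineq[of "ee n - hh n" "hh n"] by simp
      then show ?thesis using ih' bb by linarith
    qed
    also have "\<dots> = 3 * (Sm (Suc n) - real (cc (Suc n)) / real (aa (Suc n)))"
      using True by (simp add: Sm_Suc)
    finally show ?thesis .
  next
    case False
    then have c1: "cc (Suc n) > 1" using coords_basic(2)[of "Suc n"] by simp
    have sa: "aa n = aa (Suc n)" and sc: "cc n = cc (Suc n) - 1" using step_gt[of n] Suc.hyps c1 by auto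
    have cn: "cc n \<le> n" using p_bounds(3)[of n] Suc.hyps by simp
    have idx: "Suc n - cc (Suc n) = n - cc n" using sc c1 by simp
    have h: "hh (Suc n) = hh n + (Ind n - (\<beta> - \<alpha>))"
      unfolding hh_def idx by (simp only: sum.atLeastLessThan_Suc[OF diff_le_self])
    have rc: "real (cc n) = real (cc (Suc n)) - 1" using sc c1 by simp
    have "\<bar>ee (Suc n) - hh (Suc n)\<bar> = \<bar>ee n - hh n\<bar>" using h ee_Suc[of n] by simp
    also have "\<dots> \<le> 3 * (Sm n - real (cc n) / real (aa n))" by (rule Suc.IH)
    also have "Sm n - real (cc n) / real (aa n) = Sm (Suc n) - real (cc (Suc n)) / real (aa (Suc n))"
      using a1 unfolding Sm_Suc rc sa by (simp add: field_simps)
    finally show ?thesis .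
  qed
qed

lemma hh_small:
  assumes "N \<ge> 1"
  shows "\<bar>hh N\<bar> \<le> real (cc N)"
proof -
  have cN: "cc N \<le> N" using p_bounds(3)[OF assms] .
  have "\<bar>hh N\<bar> \<le> (\<Sum>n\<in>{N - cc N..<N}. \<bar>Ind n - (\<beta> - \<alpha>)\<bar>)" unfolding hh_def by (rule sum_abs)
  also have "\<dots> \<le> real (card {N - cc N..<N}) * 1"
  proof (rule sum_bounded_above)
    fix n show "\<bar>Ind n - (\<beta> - \<alpha>)\<bar> \<le> 1" using ab b1 a0 by (simp add: Ind_def abs_le_iff)
  qed
  also have "\<dots> = real (cc N)" using cN by simp
  finally show ?thesis .
qed

lemma ee_bound:
  assumes "N \<ge> 1"
  shows "\<bar>ee N\<bar> \<le> 3 * Sm N + real (aa N)"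
proof -
  have a: "\<bar>ee N - hh N\<bar> \<le> 3 * (Sm N - real (cc N) / real (aa N))" using inv[OF assms] .
  have b: "\<bar>hh N\<bar> \<le> real (cc N)" using hh_small[OF assms] .
  have c: "real (cc N) \<le> real (aa N)" using coords_basic(3)[OF assms] by simp
  define x where "x = real (cc N) / real (aa N)"
  have d: "x \<ge> 0" unfolding x_def by simp
  have a': "\<bar>ee N - hh N\<bar> \<le> 3 * Sm N - 3 * x" using a unfolding x_def by simp
  show ?thesis using a' b c d unfolding abs_le_iff by linarith
qed

lemma aa_large:
  assumes "p > L_seq q J"
  shows "aa p > J"
proof (rule ccontr)
  assume "\<not> aa p > J"
  then have "L_seq q (aa p) \<le> L_seq q J" by (intro L_mono) simp
  moreover have "p \<le> L_seq q (aa p)" using p_bounds(2)[of p] assms by simp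
  ultimately show False using assms by simp
qed

lemma Sm_bound:
  assumes J: "J \<ge> 1"
  shows "Sm N \<le> real (min N (L_seq q J)) + real N / real J"
proof (induction N)
  case 0 then show ?case by (simp add: Sm_def)
next
  case (Suc N)
  have a1: "real (aa (Suc N)) \<ge> 1" using coords_basic(1)[of "Suc N"] by simp
  show ?case
  proof (cases "Suc N \<le> L_seq q J")
    case True
    have "1 / real (aa (Suc N)) \<le> 1" using a1 by simp
    moreover have "real (min (Suc N) (L_seq q J)) = real (min N (L_seq q J)) + 1" using True by simp
    moreover have "real (Suc N) / real J \<ge> real N / real J" using J by (simp add: divide_right_mono)
    ultimately show ?thesis using Suc by (simp add: Sm_Suc)
  next
    case False
    then have "aa (Suc N) > J" using aa_large by simp
    then have "1 / real (aa (Suc N)) \<le> 1 / real J" using J by (simp add: frac_le)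
    moreover have "real (min (Suc N) (L_seq q J)) = real (min N (L_seq q J))" using False by simp
    moreover have "real (Suc N) / real J = real N / real J + 1 / real J" by (simp add: add_divide_distrib)
    ultimately show ?thesis using Suc by (simp add: Sm_Suc)
  qed
qed

lemma aa_sq:
  assumes "N \<ge> 1"
  shows "real (aa N) * (real (aa N) - 1) < 2 * real N"
proof -
  let ?a = "aa N"
  have a1: "?a \<ge> 1" using coords_basic(1)[OF assms] .
  have "(?a - 1) * (?a - 1 + 1) \<le> 2 * L_seq q (?a - 1)" by (rule L_ge)
  moreover have "L_seq q (?a - 1) < N" using p_bounds(1)[OF assms] .
  ultimately have "(?a - 1) * ?a < 2 * N" using a1 by simp
  then have "real ((?a - 1) * ?a) < real (2 * N)" by (simp only: of_nat_less_iff)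
  then show ?thesis using a1 by (simp add: of_nat_diff mult.commute)
qed

lemma count_eq:
  "real (card {n. n < N \<and> \<alpha> \<le> frac ((\<Prod>i=1..n. real (q i)) * x_F q F) \<and>
        frac ((\<Prod>i=1..n. real (q i)) * x_F q F) < \<beta>}) = ee N + real N * (\<beta> - \<alpha>)"
proof -
  have "real (card {n. n < N \<and> \<alpha> \<le> frac ((\<Prod>i=1..n. real (q i)) * x_F q F) \<and>
        frac ((\<Prod>i=1..n. real (q i)) * x_F q F) < \<beta>}) = real (card {n. n < N \<and> (\<alpha> \<le> T n \<and> T n < \<beta>)})"
    by (simp only: T_main(1))
  also have "\<dots> = (\<Sum>n<N. Ind n)" unfolding Ind_def by (rule sum_ind[symmetric])
  also have "\<dots> = ee N + real N * (\<beta> - \<alpha>)" by (simp add: ee_def sum_subtractf)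
  finally show ?thesis .
qed

lemma main_limit:
  "(\<lambda>N. real (card {n. n < N \<and> \<alpha> \<le> frac ((\<Prod>i=1..n. real (q i)) * x_F q F) \<and>
        frac ((\<Prod>i=1..n. real (q i)) * x_F q F) < \<beta>}) / real N) \<longlonglongrightarrow> \<beta> - \<alpha>"
proof (rule LIMSEQ_I)
  fix r :: real assume r: "0 < r"
  obtain J :: nat where J: "10 / r < real J" using reals_Archimedean2 by blast
  have J1: "J \<ge> 1" using J r by (cases J) (auto simp: field_simps)
  have Jr: "5 / real J < r / 2" using J r J1 by (simp add: field_simps)
  define LJ where "LJ = L_seq q J"
  obtain M :: nat where M: "6 * real LJ / r < real M" using reals_Archimedean2 by blast
  show "\<exists>no. \<forall>N\<ge>no. norm (real (card {n. n < N \<and> \<alpha> \<le> frac ((\<Prod>i=1..n. real (q i)) * x_F q F) \<and>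
        frac ((\<Prod>i=1..n. real (q i)) * x_F q F) < \<beta>}) / real N - (\<beta> - \<alpha>)) < r"
  proof (intro exI allI impI)
    fix N assume N: "N \<ge> max (Suc LJ) (Suc M)"
    have N1: "N \<ge> 1" using N by simp
    have Npos: "real N > 0" using N1 by simp
    have NL: "N > LJ" using N by simp
    have NM: "real N > real M" using N by simp
    have "real (card {n. n < N \<and> \<alpha> \<le> frac ((\<Prod>i=1..n. real (q i)) * x_F q F) \<and>
        frac ((\<Prod>i=1..n. real (q i)) * x_F q F) < \<beta>}) / real N - (\<beta> - \<alpha>) = ee N / real N"
      unfolding count_eq using Npos by (simp add: field_simps)
    moreover have "\<bar>ee N / real N\<bar> < r"
    proof -
      have A: "aa N > J" using aa_large NL LJ_def by simp
      let ?A = "real (aa N)"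
      have A2: "?A - 1 \<ge> real J" using A by simp
      have Jpos: "real J > 0" using J1 by simp
      have sq: "?A * (?A - 1) < 2 * real N" using aa_sq[OF N1] .
      have "?A / real N < 2 / (?A - 1)"
        using sq Npos A2 Jpos by (simp add: field_simps)
      also have "\<dots> \<le> 2 / real J" using A2 Jpos by (intro divide_left_mono) auto
      finally have Aq: "?A / real N < 2 / real J" .
      have Sb: "Sm N \<le> real LJ + real N / real J"
        using Sm_bound[OF J1, of N] NL unfolding LJ_def by simp
      have "3 * real LJ / real N < r / 2"
      proof -
        have "6 * real LJ < r * real M" using M r by (simp add: field_simps)
        also have "\<dots> \<le> r * real N" using NM r by simp
        finally show ?thesis using Npos by (simp add: field_simps)
      qed
      have "\<bar>ee N / real N\<bar> = \<bar>ee N\<bar> / real N" using Npos by simp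
      also have "\<dots> \<le> (3 * Sm N + ?A) / real N"
        using ee_bound[OF N1] Npos by (intro divide_right_mono) auto
      also have "\<dots> = 3 * Sm N / real N + ?A / real N" by (simp add: add_divide_distrib)
      also have "3 * Sm N / real N \<le> 3 * (real LJ + real N / real J) / real N"
        using Sb Npos by (intro divide_right_mono) auto
      also have "3 * (real LJ + real N / real J) / real N = 3 * real LJ / real N + 3 / real J"
        using Npos by (simp add: field_simps)
      finally show ?thesis using Aq Jr \<open>3 * real LJ / real N < r / 2\<close> by linarith
    qed
    ultimately show "norm (real (card {n. n < N \<and> \<alpha> \<le> frac ((\<Prod>i=1..n. real (q i)) * x_F q F) \<and>
        frac ((\<Prod>i=1..n. real (q i)) * x_F q F) < \<beta>}) / real N - (\<beta> - \<alpha>)) < r" by simp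
  qed
qed

end

theorem mainTheorem1:
  fixes q :: "nat \<Rightarrow> nat" and F :: "nat \<times> nat \<times> nat \<Rightarrow> int"
  assumes "basic_sequence q" and "infinite_in_limit q" and "Q_special q F"
  shows "Q_distribution_normal q (x_F q F)"
  unfolding Q_distribution_normal_def uniformly_distributed_mod1_def
proof (intro allI impI)
  fix a b :: real assume ab: "0 \<le> a \<and> a < b \<and> b \<le> 1"
  interpret qsI q F a b using assms ab by unfold_locales auto
  show "(\<lambda>N. real (card {n. n < N \<and> a \<le> frac ((\<Prod>i = 1..n. real (q i)) * x_F q F) \<and>
          frac ((\<Prod>i = 1..n. real (q i)) * x_F q F) < b}) / real N) \<longlonglongrightarrow> b - a"
    by (rule main_limit)
qed

end
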